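(* Let $\varphi(x)=\sum_{i\ge0}\gamma_ix^i\in\mathbb{K}[[x]]$ and let $r$ be an odd negative integer. Assume $\gamma_i=0$ for each $i\le -r$. Then $\varphi\in\mathcal{F}_r$ if and only if $$\sum_{i=0}^m(-1)^i\binom{m}{i}\frac{m+i}{m}\gamma_{m-r+i}=0\quad\text{for each } m\ge1.$$
   Context: $\mathbb{K}\in\{\mathbb{Q},\mathbb{R},\mathbb{C}\}$. For $r\in\mathbb{Z}$, $\mathcal{F}_r$ denotes the space of $\varphi\in\mathbb{K}[[x]]$ with $\varphi(x/(x-1))=(1-x)^r\varphi(x)$. *)

theory Defs
  imports "HOL-Computational_Algebra.Formal_Power_Series"
begin

text \<open>Integer powers of a formal power series: for negative exponents use the
  formal inverse (well defined here since it is applied to 1 - X, which is a unit).\<close>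
definition fps_int_power :: "'a::field fps \<Rightarrow> int \<Rightarrow> 'a fps" where
  "fps_int_power f r = (if 0 \<le> r then f ^ nat r else inverse (f ^ nat (- r)))"

definition F_space :: "int \<Rightarrow> 'a::field fps set" where
  "F_space r = {\<phi>. fps_compose \<phi> (fps_X * inverse (fps_X - 1))
                   = fps_int_power (1 - fps_X) r * \<phi>}"

end

theory Submission
  imports Defs
begin

unbundle fps_syntax


lemma onepX_pow_nth: "((1 + fps_X :: 'a::field_char_0 fps) ^ n) $ k = of_nat (n choose k)"
  by (simp add: fps_binomial_of_nat[symmetric] binomial_gbinomial)

lemma m1pow_mult_nth: "(((-1 :: 'a::comm_ring_1 fps))^i * g) $ q = (-1)^i * g $ q"
  by (induction i) simp_all

lemma ofnat_mult_nth: "((of_nat c :: 'a::comm_ring_1 fps) * g) $ q = of_nat c * g $ q"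
proof -
  have "(of_nat c :: 'a fps) = fps_const (of_nat c)" by (rule fps_of_nat[symmetric])
  thus ?thesis by simp
qed

lemma identV:
  fixes m q :: nat
  shows "(\<Sum>i=0..m. (-1)^i * of_nat (m choose i) * of_nat ((m+i) choose q) :: 'a::field_char_0)
        = (if m \<le> q then (-1)^m * of_nat (m choose (q - m)) else 0)"
proof -
  define Y where "Y = (1 + fps_X :: 'a fps)"
  have b: "(- Y + 1)^m = (\<Sum>i=0..m. of_nat (m choose i) * (- Y)^i * 1^(m-i))"
    using binomial_ring[of "- Y" 1 m] by (simp add: atLeast0AtMost)
  have mx: "- Y + 1 = - fps_X" by (simp add: Y_def)
  have e: "Y^m * (- fps_X)^m = (\<Sum>i=0..m. of_nat (m choose i) * ((-1)^i * Y^(m+i)))"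
    unfolding mx[symmetric] b sum_distrib_left
  proof (rule sum.cong)
    fix i
    have "(- Y)^i = (-1)^i * Y^i" by (rule power_minus)
    show "Y ^ m * (of_nat (m choose i) * (- Y) ^ i * 1 ^ (m - i)) = of_nat (m choose i) * ((- 1) ^ i * Y ^ (m + i))"
    proof -
      have "Y ^ m * (of_nat (m choose i) * (- Y) ^ i * 1 ^ (m - i)) = Y ^ m * (of_nat (m choose i) * ((- 1) ^ i * Y ^ i))"
        by (simp only: power_one mult_1_right \<open>(- Y)^i = (-1)^i * Y^i\<close>)
      also have "\<dots> = of_nat (m choose i) * ((- 1) ^ i * (Y ^ m * Y ^ i))" by (simp only: mult_ac)
      finally show ?thesis by (simp only: power_add)
    qed
  qed simp
  have "(Y^m * (- fps_X)^m) $ q = (\<Sum>i=0..m. (-1)^i * of_nat (m choose i) * of_nat ((m+i) choose q))"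
    unfolding e fps_sum_nth ofnat_mult_nth m1pow_mult_nth unfolding Y_def onepX_pow_nth by (rule sum.cong) (simp_all only: mult_ac)
  moreover have "(Y^m * (- fps_X)^m) $ q = (if m \<le> q then (-1)^m * of_nat (m choose (q - m)) else 0)"
  proof -
    have pm: "(- fps_X :: 'a fps)^m = (-1)^m * fps_X^m" by (rule power_minus)
    have eq: "Y^m * (- fps_X)^m = (-1)^m * (fps_X^m * Y^m)"
      unfolding pm by (simp only: mult_ac)
    show ?thesis unfolding eq m1pow_mult_nth fps_X_power_mult_nth unfolding Y_def onepX_pow_nth
      by simp
  qed
  ultimately show ?thesis by simp
qed



definition w :: "nat \<Rightarrow> nat \<Rightarrow> 'a::field_char_0" where
  "w m i = (-1)^i * of_nat (m choose i) * (of_nat (m + i) / of_nat m)"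

lemma choose_aux: "m \<ge> 1 \<Longrightarrow> q \<ge> 1 \<Longrightarrow> (m+i) * ((m+i-1) choose (q-1)) = q * ((m+i) choose q)"
  using Suc_times_binomial_eq[of "m+i-1" "q-1"] by simp

lemma identK:
  fixes m q :: nat assumes m: "m \<ge> 1" and q: "q \<ge> 1"
  shows "(\<Sum>i=0..m. w m i * of_nat ((m+i-1) choose (q-1)) :: 'a::field_char_0)
        = (-1)^q * (if m \<le> q then w m (q - m) else 0)"
proof -
  have "w m i * of_nat ((m+i-1) choose (q-1)) = (of_nat q / of_nat m) *
      ((-1)^i * of_nat (m choose i) * of_nat ((m+i) choose q) :: 'a)" for i
  proof -
    have "(of_nat (m+i) * of_nat ((m+i-1) choose (q-1)) :: 'a) = of_nat q * of_nat ((m+i) choose q)"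
      using choose_aux[OF m q, of i] by (metis of_nat_mult)
    hence E: "(of_nat q * of_nat ((m+i) choose q) :: 'a) = of_nat (m+i) * of_nat ((m+i-1) choose (q-1))" by simp
    have "(of_nat q / of_nat m) * ((-1)^i * of_nat (m choose i) * of_nat ((m+i) choose q) :: 'a)
       = (-1)^i * of_nat (m choose i) * ((of_nat q * of_nat ((m+i) choose q)) / of_nat m)"
      by (simp add: mult_ac)
    also have "\<dots> = w m i * of_nat ((m+i-1) choose (q-1))" unfolding E w_def by (simp add: mult_ac)
    finally show ?thesis by simp
  qed
  hence "(\<Sum>i=0..m. w m i * of_nat ((m+i-1) choose (q-1)) :: 'a) =
     (of_nat q / of_nat m) * (\<Sum>i=0..m. (-1)^i * of_nat (m choose i) * of_nat ((m+i) choose q))"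
    by (simp add: sum_distrib_left)
  also have "\<dots> = (of_nat q / of_nat m) * (if m \<le> q then (-1)^m * of_nat (m choose (q - m)) else 0)"
    by (simp add: identV)
  also have "\<dots> = (-1)^q * (if m \<le> q then w m (q - m) else 0)"
  proof (cases "m \<le> q")
    case True
    have "((-1)::'a)^q = (-1)^(q-m) * (-1)^m" using True by (simp flip: power_add)
    hence "((-1)::'a)^q * (-1)^(q-m) = ((-1)^(q-m) * (-1)^(q-m)) * (-1)^m" by (simp add: mult_ac)
    hence "((-1)::'a)^q * (-1)^(q-m) = (-1)^m" by (simp add: left_minus_one_mult_self)
    moreover have "of_nat (m + (q - m)) = (of_nat q :: 'a)" using True by simp
    ultimately show ?thesis using True m unfolding w_def by (simp add: field_simps)
  qed simp
  finally show ?thesis .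
qed



lemma G_nth: "inverse ((1 - fps_X :: 'a::field_char_0 fps)^q) $ j = of_nat ((q+j-1) choose j)"
proof (induction q arbitrary: j)
  case 0
  then show ?case by (cases j) auto
next
  case (Suc q)
  have "inverse ((1 - fps_X :: 'a fps)^Suc q) = inverse ((1 - fps_X)^q) * inverse (1 - fps_X)"
    by (simp add: fps_inverse_mult mult_ac)
  also have "inverse (1 - fps_X :: 'a fps) = Abs_fps (\<lambda>n. 1)" by (rule fps_inverse_one_minus_fps_X)
  finally have "inverse ((1 - fps_X :: 'a fps)^Suc q) $ j = (\<Sum>i=0..j. of_nat ((q+i-1) choose i))"
    by (simp add: fps_mult_nth Suc)
  also have "\<dots> = of_nat ((Suc q + j - 1) choose j)"
  proof (cases q)
    case 0
    have "(\<Sum>i=0..j. of_nat ((0+i-1) choose i) :: 'a) = 1" for j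
      by (induction j) auto
    then show ?thesis by (simp add: 0)
  next
    case (Suc p)
    have "(\<Sum>i=0..j. of_nat ((q+i-1) choose i) :: 'a) = of_nat (\<Sum>i\<le>j. (p+i) choose i)"
      by (simp add: Suc atLeast0AtMost)
    also have "\<dots> = of_nat (Suc (p+j) choose j)" by (simp only: sum_choose_lower)
    finally show ?thesis by (simp add: Suc)
  qed
  finally show ?case .
qed

definition sig :: "'a::field fps" where "sig = fps_X * inverse (fps_X - 1)"

lemma sig0: "sig $ 0 = 0" by (simp add: sig_def)

lemma inv_Xm1: "inverse (fps_X - 1 :: 'a::field fps) = - inverse (1 - fps_X)"
proof -
  have "fps_X - 1 = - (1 - fps_X :: 'a fps)" by simp
  thus ?thesis by (metis fps_inverse_minus)
qed

lemma sig_alt: "(sig :: 'a::field fps) = - (fps_X * inverse (1 - fps_X))"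
  by (simp add: sig_def inv_Xm1)

lemma sig_pow: "(sig :: 'a::field fps)^n = (-1)^n * (fps_X^n * inverse ((1 - fps_X)^n))"
proof -
  have "(sig :: 'a fps)^n = (-1)^n * (fps_X * inverse (1 - fps_X))^n"
    unfolding sig_alt by (rule power_minus)
  also have "(fps_X * inverse (1 - fps_X :: 'a fps))^n = fps_X^n * inverse (1 - fps_X)^n"
    by (rule power_mult_distrib)
  also have "inverse (1 - fps_X :: 'a fps)^n = inverse ((1 - fps_X)^n)"
    by (rule fps_inverse_power[symmetric])
  finally show ?thesis .
qed

lemma tau_ge:
  assumes "s \<le> n"
  shows "((1 - fps_X)^s * sig^n :: 'a::field_char_0 fps) $ k
        = (-1)^n * (if n \<le> k then of_nat ((k-s-1) choose (k-n)) else 0)"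
proof -
  have i: "(1 - fps_X :: 'a fps)^s * inverse ((1 - fps_X)^n) = inverse ((1 - fps_X)^(n-s))"
  proof -
    have "(1 - fps_X :: 'a fps)^n = (1 - fps_X)^s * (1 - fps_X)^(n-s)" using assms by (simp flip: power_add)
    hence "inverse ((1 - fps_X :: 'a fps)^n) = inverse ((1 - fps_X)^s) * inverse ((1 - fps_X)^(n-s))"
      by (simp add: fps_inverse_mult)
    moreover have "(1 - fps_X :: 'a fps)^s * inverse ((1 - fps_X)^s) = 1"
      by (rule inverse_mult_eq_1') simp
    ultimately show ?thesis by (simp flip: mult.assoc)
  qed
  have "(1 - fps_X)^s * sig^n = (-1)^n * (fps_X^n * ((1 - fps_X :: 'a fps)^s * inverse ((1 - fps_X)^n)))"
    unfolding sig_pow by (simp only: mult_ac)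
  also have "\<dots> = (-1)^n * (fps_X^n * inverse ((1 - fps_X :: 'a fps)^(n-s)))" unfolding i ..
  finally have eq: "(1 - fps_X)^s * sig^n = (-1)^n * (fps_X^n * inverse ((1 - fps_X :: 'a fps)^(n-s)))" .
  have "n - s + (k - n) - 1 = k - s - 1" if "n \<le> k" using that assms by simp
  thus ?thesis unfolding eq m1pow_mult_nth fps_X_power_mult_nth G_nth by auto
qed

lemma tau_diag: "((1 - fps_X)^s * sig^k :: 'a::field_char_0 fps) $ k = (-1)^k"
proof -
  have eq: "(1 - fps_X)^s * sig^k = (-1)^k * (fps_X^k * ((1 - fps_X)^s * inverse ((1 - fps_X :: 'a fps)^k)))"
    unfolding sig_pow by (simp only: mult_ac)
  show ?thesis unfolding eq m1pow_mult_nth fps_X_power_mult_nth by (simp add: fps_nth_power_0)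
qed



definition T :: "nat \<Rightarrow> 'a::field_char_0 fps \<Rightarrow> 'a fps" where
  "T s f = (1 - fps_X)^s * (f oo sig)"

lemma T_nth:
  assumes "k \<le> M"
  shows "T s f $ k = (\<Sum>n=0..M. f $ n * ((1 - fps_X)^s * sig^n) $ k)"
proof -
  let ?U = "(1 - fps_X :: 'a fps)^s"
  have c: "(f oo sig) $ j = (\<Sum>n=0..M. f $ n * (sig^n) $ j)" if "j \<le> k" for j
  proof -
    have "(f oo sig) $ j = (\<Sum>n=0..j. f $ n * (sig^n) $ j)" by (rule fps_compose_nth)
    also have "\<dots> = (\<Sum>n=0..M. f $ n * (sig^n) $ j)"
    proof (rule sum.mono_neutral_left)
      show "{0..j} \<subseteq> {0..M}" using that assms by auto
      show "\<forall>i\<in>{0..M} - {0..j}. f $ i * (sig^i) $ j = 0"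
      proof
        fix i assume "i \<in> {0..M} - {0..j}"
        hence "j < i" by auto
        hence "(sig^i) $ j = (0::'a)" using startsby_zero_power_prefix[OF sig0] by blast
        thus "f $ i * (sig^i) $ j = 0" by simp
      qed
    qed simp
    finally show ?thesis .
  qed
  have "T s f $ k = (\<Sum>i=0..k. ?U $ i * (f oo sig) $ (k - i))" unfolding T_def by (rule fps_mult_nth)
  also have "\<dots> = (\<Sum>i=0..k. \<Sum>n=0..M. f $ n * (?U $ i * (sig^n) $ (k - i)))"
  proof (rule sum.cong)
    fix i assume "i \<in> {0..k}"
    hence "(f oo sig) $ (k - i) = (\<Sum>n=0..M. f $ n * (sig^n) $ (k - i))" by (intro c) simp
    thus "?U $ i * (f oo sig) $ (k - i) = (\<Sum>n=0..M. f $ n * (?U $ i * (sig^n) $ (k - i)))"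
      by (simp only: sum_distrib_left mult.left_commute)
  qed simp
  also have "\<dots> = (\<Sum>n=0..M. \<Sum>i=0..k. f $ n * (?U $ i * (sig^n) $ (k - i)))"
    by (rule sum.swap)
  also have "\<dots> = (\<Sum>n=0..M. f $ n * (?U * sig^n) $ k)"
    by (simp only: fps_mult_nth sum_distrib_left)
  finally show ?thesis .
qed

lemma Xm1_inv: "(fps_X - 1 :: 'a::field fps) * inverse (fps_X - 1) = 1"
  by (rule inverse_mult_eq_1') simp

lemma sig_sig: "sig oo sig = (fps_X :: 'a::field fps)"
proof -
  have X: "fps_X oo sig = (sig :: 'a fps)"
    by (rule fps_ext) (simp add: fps_X_fps_compose sig0)
  have s1: "sig - 1 = inverse (fps_X - 1 :: 'a fps)"
    using Xm1_inv[where 'a='a] by (simp add: sig_def algebra_simps)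
  have "inverse (fps_X - 1) oo sig = inverse ((fps_X - 1) oo (sig :: 'a fps))"
    by (rule fps_inverse_compose) (simp_all add: sig0)
  also have "(fps_X - 1) oo (sig :: 'a fps) = sig - 1"
    by (simp add: fps_compose_sub_distrib X)
  also have "inverse (sig - 1) = (fps_X - 1 :: 'a fps)" unfolding s1 by simp
  finally have i: "inverse (fps_X - 1) oo sig = (fps_X - 1 :: 'a fps)" .
  have "sig oo sig = (fps_X oo sig) * (inverse (fps_X - 1) oo (sig :: 'a fps))"
    unfolding sig_def[of] by (rule fps_compose_mult_distrib) (simp add: sig_def)
  also have "\<dots> = sig * (fps_X - 1)" by (simp add: X i)
  also have "\<dots> = fps_X" using Xm1_inv[where 'a='a] by (simp add: sig_def mult_ac)
  finally show ?thesis .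
qed

lemma U_comp: "(1 - fps_X :: 'a::field fps)^s * (((1 - fps_X)^s) oo sig) = 1"
proof -
  have X: "fps_X oo sig = (sig :: 'a fps)"
    by (rule fps_ext) (simp add: fps_X_fps_compose sig0)
  have "((1 - fps_X)^s) oo sig = ((1 - fps_X) oo (sig :: 'a fps))^s"
    by (simp add: fps_compose_power sig0)
  also have "(1 - fps_X) oo (sig :: 'a fps) = 1 - sig" by (simp add: fps_compose_sub_distrib X)
  finally have "(1 - fps_X :: 'a fps)^s * (((1 - fps_X)^s) oo sig) = ((1 - fps_X) * (1 - sig))^s"
    by (simp add: power_mult_distrib)
  also have "(1 - fps_X) * (1 - sig) = (1 :: 'a fps)"
    using Xm1_inv[where 'a='a] by (simp add: sig_def algebra_simps)
  finally show ?thesis by simp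
qed

lemma T_invol: "T s (T s f) = (f :: 'a::field_char_0 fps)"
proof -
  have "T s (T s f) = (1 - fps_X)^s * ((((1 - fps_X)^s) oo sig) * ((f oo sig) oo sig))"
    unfolding T_def by (simp add: fps_compose_mult_distrib sig0)
  also have "(f oo sig) oo sig = f oo (sig oo sig)"
    by (rule fps_compose_assoc[symmetric]) (simp_all add: sig0)
  also have "\<dots> = f" by (simp add: sig_sig)
  finally show ?thesis using U_comp[where 'a='a and s=s] by (simp flip: mult.assoc)
qed

lemma T_diff: "T s (f - g) = T s f - T s (g :: 'a::field_char_0 fps)"
  by (simp add: T_def fps_compose_sub_distrib algebra_simps)

lemma p_int: assumes "r < 0" shows "fps_int_power (1 - fps_X) r = inverse ((1 - fps_X :: 'a::field fps)^nat (-r))"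
  using assms unfolding fps_int_power_def by (simp only: if_False not_le[symmetric] refl)

lemma u0: "((1 - fps_X :: 'a::field fps)^n) $ 0 \<noteq> 0" unfolding fps_nth_power_0 by simp

lemma F_mem: "f \<in> F_space r \<longleftrightarrow> f oo sig = fps_int_power (1 - fps_X) r * (f:: 'a::field fps)"
  unfolding F_space_def sig_def by (rule mem_Collect_eq)

lemma F_iff:
  assumes "r < 0"
  shows "(f :: 'a::field_char_0 fps) \<in> F_space r \<longleftrightarrow> T (nat (-r)) f = f"
proof -
  let ?U = "(1 - fps_X :: 'a fps)^nat (-r)"
  have u: "?U * inverse ?U = 1" by (rule inverse_mult_eq_1'[OF u0])
  have "f \<in> F_space r \<longleftrightarrow> f oo sig = inverse ?U * f" unfolding F_mem p_int[OF assms] ..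
  also have "\<dots> \<longleftrightarrow> ?U * (f oo sig) = f"
  proof
    assume h: "f oo sig = inverse ?U * f"
    have "?U * (f oo sig) = (?U * inverse ?U) * f" unfolding h by (simp only: mult.assoc)
    thus "?U * (f oo sig) = f" unfolding u by (simp only: mult_1_left)
  next
    assume h: "?U * (f oo sig) = f"
    have "inverse ?U * f = inverse ?U * (?U * (f oo sig))" by (simp only: h)
    also have "\<dots> = (inverse ?U * ?U) * (f oo sig)" by (simp only: mult.assoc)
    also have "inverse ?U * ?U = 1" using u by (simp only: mult.commute)
    finally show "f oo sig = inverse ?U * f" by (simp only: mult_1_left)
  qed
  also have "\<dots> \<longleftrightarrow> T (nat (-r)) f = f" unfolding T_def ..
  finally show ?thesis .
qed



definition Lst :: "nat \<Rightarrow> nat \<Rightarrow> 'a::field_char_0 fps \<Rightarrow> 'a" where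
  "Lst s m g = (\<Sum>i=0..m. w m i * g $ (m+s+i))"

definition rho :: "nat \<Rightarrow> nat \<Rightarrow> nat \<Rightarrow> 'a::field_char_0" where
  "rho s m n = (if m+s \<le> n then w m (n-m-s) else 0)"

lemma Lst_alt: "Lst s m g = (\<Sum>n=0..2*m+s. g $ n * rho s m n)"
proof -
  have "Lst s m g = (\<Sum>i=0..m. g $ (m+s+i) * rho s m (m+s+i))"
    unfolding Lst_def rho_def by (simp add: mult.commute)
  also have "\<dots> = (\<Sum>n\<in>(\<lambda>i. m+s+i) ` {0..m}. g $ n * rho s m n)"
    by (subst sum.reindex) (auto simp: inj_on_def)
  also have "\<dots> = (\<Sum>n=0..2*m+s. g $ n * rho s m n)"
  proof (rule sum.mono_neutral_left)
    show "\<forall>n\<in>{0..2*m+s} - (\<lambda>i. m+s+i) ` {0..m}. g $ n * rho s m n = 0"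
    proof
      fix n assume n: "n \<in> {0..2*m+s} - (\<lambda>i. m+s+i) ` {0..m}"
      have "\<not> m + s \<le> n"
      proof
        assume "m + s \<le> n"
        hence "n = m+s+(n-m-s)" "n-m-s \<in> {0..m}" using n by auto
        thus False using n by blast
      qed
      thus "g $ n * rho s m n = 0" by (simp add: rho_def)
    qed
  qed auto
  finally show ?thesis .
qed

lemma binom_aux:
  assumes "s < n" "m \<ge> 1"
  shows "(if n \<le> m+s+i then (m+s+i-s-1) choose (m+s+i-n) else 0) = (m+i-1) choose (n-s-1)"
proof (cases "n \<le> m+s+i")
  case True
  have "(m+i-1) choose (n-s-1) = (m+i-1) choose ((m+i-1) - (n-s-1))"
    by (rule binomial_symmetric) (use True assms in auto)
  also have "(m+i-1) - (n-s-1) = m+s+i-n" using True assms by auto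
  finally show ?thesis using True by simp
next
  case False
  then show ?thesis using assms by (simp add: binomial_eq_0)
qed

lemma key_n:
  assumes s: "odd s" and n: "s < n" and m: "m \<ge> 1"
  shows "(\<Sum>i=0..m. w m i * ((1 - fps_X)^s * sig^n :: 'a::field_char_0 fps) $ (m+s+i)) = - rho s m n"
proof -
  have "(\<Sum>i=0..m. w m i * ((1 - fps_X)^s * sig^n :: 'a fps) $ (m+s+i))
      = (\<Sum>i=0..m. (-1)^n * (w m i * of_nat ((m+i-1) choose ((n-s)-1))))"
  proof (rule sum.cong)
    fix i assume "i \<in> {0..m}"
    have "((1 - fps_X)^s * sig^n :: 'a fps) $ (m+s+i)
        = (-1)^n * of_nat (if n \<le> m+s+i then (m+s+i-s-1) choose (m+s+i-n) else 0)"
      using n by (simp add: tau_ge)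
    also have "\<dots> = (-1)^n * of_nat ((m+i-1) choose (n-s-1))" using binom_aux[OF n m] by simp
    finally show "w m i * ((1 - fps_X)^s * sig^n :: 'a fps) $ (m+s+i) = (-1)^n * (w m i * of_nat ((m+i-1) choose ((n-s)-1)))"
      by (simp add: mult_ac)
  qed simp
  also have "\<dots> = (-1)^n * (\<Sum>i=0..m. w m i * of_nat ((m+i-1) choose ((n-s)-1)))"
    by (simp add: sum_distrib_left)
  also have "\<dots> = (-1)^n * ((-1)^(n-s) * (if m \<le> n-s then w m (n-s-m) else 0))"
  proof -
    have q1: "1 \<le> n - s" using n by simp
    show ?thesis using identK[OF m q1] by simp
  qed
  also have "((-1::'a)^n) * (-1)^(n-s) = -1"
  proof -
    have "((-1::'a)^n) = (-1)^(n-s) * (-1)^s" using n by (simp flip: power_add)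
    hence "((-1::'a)^n) * (-1)^(n-s) = ((-1)^(n-s) * (-1)^(n-s)) * (-1)^s" by (simp add: mult_ac)
    thus ?thesis using s by (simp add: left_minus_one_mult_self)
  qed
  hence "((-1::'a)^n) * ((-1)^(n-s) * (if m \<le> n-s then w m (n-s-m) else 0))
      = - (if m \<le> n-s then w m (n-s-m) else 0)" by (simp flip: mult.assoc)
  also have "\<dots> = - rho s m n" unfolding rho_def using n by (auto simp: diff_diff_add add.commute)
  finally show ?thesis .
qed

lemma Lst_T:
  assumes s: "odd s" and m: "m \<ge> 1" and z: "\<And>n. n \<le> s \<Longrightarrow> f $ n = 0"
  shows "Lst s m (T s f) = - Lst s m (f :: 'a::field_char_0 fps)"
proof -
  let ?N = "2*m+s"
  have "Lst s m (T s f) = (\<Sum>i=0..m. w m i * (\<Sum>n=0..?N. f $ n * ((1 - fps_X)^s * sig^n) $ (m+s+i)))"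
    unfolding Lst_def by (rule sum.cong) (simp_all add: T_nth)
  also have "\<dots> = (\<Sum>i=0..m. \<Sum>n=0..?N. f $ n * (w m i * ((1 - fps_X)^s * sig^n) $ (m+s+i)))"
    by (simp add: sum_distrib_left mult_ac)
  also have "\<dots> = (\<Sum>n=0..?N. \<Sum>i=0..m. f $ n * (w m i * ((1 - fps_X)^s * sig^n) $ (m+s+i)))"
    by (rule sum.swap)
  also have "\<dots> = (\<Sum>n=0..?N. f $ n * (- rho s m n))"
  proof (rule sum.cong)
    fix n assume "n \<in> {0..?N}"
    show "(\<Sum>i=0..m. f $ n * (w m i * ((1 - fps_X)^s * sig^n) $ (m+s+i))) = f $ n * (- rho s m n)"
    proof (cases "n \<le> s")
      case True thus ?thesis by (simp add: z)
    next
      case False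
      hence "s < n" by simp
      have "(\<Sum>i=0..m. f $ n * (w m i * ((1 - fps_X)^s * sig^n) $ (m+s+i)))
          = f $ n * (\<Sum>i=0..m. w m i * ((1 - fps_X)^s * sig^n :: 'a fps) $ (m+s+i))"
        by (simp add: sum_distrib_left)
      also have "\<dots> = f $ n * (- rho s m n)" by (simp only: key_n[OF s \<open>s < n\<close> m])
      finally show ?thesis .
    qed
  qed simp
  also have "\<dots> = - Lst s m f" by (simp add: Lst_alt sum_negf)
  finally show ?thesis .
qed



lemma self_neg: "(x::'a::field_char_0) = - x \<Longrightarrow> x = 0"
  by simp

lemma Lst_diff: "Lst s m (f - g) = Lst s m f - Lst s m (g :: 'a::field_char_0 fps)"
  unfolding Lst_def by (simp add: sum_subtractf right_diff_distrib)

lemma w_mm: "m \<ge> 1 \<Longrightarrow> w m m \<noteq> (0::'a::field_char_0)"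
  unfolding w_def by simp

lemma main_equiv:
  fixes \<phi> :: "'a::field_char_0 fps"
  assumes s: "odd s" and z: "\<And>n. n \<le> s \<Longrightarrow> \<phi> $ n = 0"
  shows "T s \<phi> = \<phi> \<longleftrightarrow> (\<forall>m. m \<ge> 1 \<longrightarrow> Lst s m \<phi> = 0)"
proof
  assume h: "T s \<phi> = \<phi>"
  show "\<forall>m. m \<ge> 1 \<longrightarrow> Lst s m \<phi> = 0"
  proof (intro allI impI)
    fix m :: nat assume m: "m \<ge> 1"
    have "Lst s m \<phi> = - Lst s m \<phi>" using Lst_T[OF s m z] unfolding h .
    thus "Lst s m \<phi> = 0" by (rule self_neg)
  qed
next
  assume L: "\<forall>m. m \<ge> 1 \<longrightarrow> Lst s m \<phi> = 0"
  define \<psi> where "\<psi> = \<phi> - T s \<phi>"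
  have Tpsi: "T s \<psi> = - \<psi>" unfolding \<psi>_def T_diff T_invol by simp
  have Lpsi: "Lst s m \<psi> = 0" if m: "m \<ge> 1" for m
    unfolding \<psi>_def Lst_diff using L m Lst_T[OF s m z] by simp
  have zT: "T s \<phi> $ n = 0" if "n \<le> s" for n
    unfolding T_nth[OF order.refl] using that z by (intro sum.neutral) auto
  have zpsi: "\<psi> $ n = 0" if "n \<le> s" for n
    unfolding \<psi>_def using that z zT by simp
  have "\<psi> $ k = 0" for k
  proof (induction k rule: less_induct)
    case (less k)
    show ?case
    proof (cases "k \<le> s")
      case True thus ?thesis by (rule zpsi)
    next
      case False
      show ?thesis
      proof (cases "even k")
        case True
        have "T s \<psi> $ k = (\<Sum>n=0..k. \<psi> $ n * ((1 - fps_X)^s * sig^n) $ k)"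
          by (rule T_nth) simp
        also have "\<dots> = (\<Sum>n\<in>{k}. \<psi> $ n * ((1 - fps_X)^s * sig^n) $ k)"
          by (rule sum.mono_neutral_right) (auto simp: less)
        also have "\<dots> = \<psi> $ k" using True by (simp add: tau_diag)
        finally have "\<psi> $ k = - (\<psi> $ k)" unfolding Tpsi by simp
        thus ?thesis by (rule self_neg)
      next
        case odd: False
        define m where "m = (k - s) div 2"
        have ev: "even (k - s)" using odd s False by (simp add: even_diff_nat)
        then obtain d where d: "k - s = 2 * d" by (elim evenE)
        have km: "k = m + s + m" unfolding m_def using d False by simp
        have m1: "m \<ge> 1" using False km by auto
        have "0 = Lst s m \<psi>" using Lpsi[OF m1] by simp
        also have "\<dots> = (\<Sum>i\<in>{m}. w m i * \<psi> $ (m+s+i))" unfolding Lst_def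
          by (rule sum.mono_neutral_right) (auto simp: less km)
        also have "\<dots> = w m m * \<psi> $ k" using km by simp
        finally have "w m m * \<psi> $ k = 0" by simp
        moreover have "w m m \<noteq> (0::'a)" by (rule w_mm[OF m1])
        ultimately show ?thesis by simp
      qed
    qed
  qed
  hence "\<psi> = 0" by (intro fps_ext) simp
  thus "T s \<phi> = \<phi>" unfolding \<psi>_def by simp
qed

theorem corollary4p8:
  fixes \<phi> :: "'a::field_char_0 fps" and r :: int
  assumes "odd r" and "r < 0"
    and "\<And>i::nat. int i \<le> - r \<Longrightarrow> fps_nth \<phi> i = 0"
  shows "\<phi> \<in> F_space r \<longleftrightarrow>
    (\<forall>m::nat. m \<ge> 1 \<longrightarrow>
       (\<Sum>i=0..m. (-1)^i * of_nat (m choose i) * (of_nat (m + i) / of_nat m)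
                   * fps_nth \<phi> (nat (int m - r + int i))) = (0::'a))"
proof -
  define s where "s = nat (-r)"
  have sr: "int s = - r" unfolding s_def using assms(2) by simp
  have s: "odd s" using assms(1) sr by (metis even_minus even_of_nat)
  have z: "\<phi> $ n = 0" if "n \<le> s" for n using assms(3)[of n] that sr by simp
  have sumeq: "(\<Sum>i=0..m. (-1)^i * of_nat (m choose i) * (of_nat (m + i) / of_nat m)
                   * fps_nth \<phi> (nat (int m - r + int i))) = Lst s m \<phi>" for m
    unfolding Lst_def w_def
  proof (rule sum.cong)
    fix i
    have "nat (int m - r + int i) = m + s + i" using sr by simp
    thus "(-1)^i * of_nat (m choose i) * (of_nat (m + i) / of_nat m) * \<phi> $ nat (int m - r + int i)
        = (-1)^i * of_nat (m choose i) * (of_nat (m + i) / of_nat m) * \<phi> $ (m + s + i)" by simp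
  qed simp
  show ?thesis unfolding sumeq F_iff[OF assms(2)] s_def[symmetric] using main_equiv[OF s z] .
qed

end
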